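(* For any positive integer $n$ and any $m\in\mathbb{Z}$, \[ \sum_{l=0}^n\big(q^{-nm}z^{n-l}-z^l\big)\prod_{i=1}^l\frac{(q^m-z^i)(1-z^{n-i+1})}{(1-q^mz^{n-i+1})(1-z^i)}=0, \] as an identity of rational functions in $z$ and $q$.
   Context: The empty product (for $l=0$) equals $1$. *)

theory Defs
  imports Complex_Main
begin

end

theory Submission
  imports Defs
begin

definition poch :: "'a::field \<Rightarrow> 'a \<Rightarrow> nat \<Rightarrow> 'a" where
  "poch b x k = (\<Prod>j<k. 1 - b * x ^ j)"

definition gp :: "'a::field \<Rightarrow> nat \<Rightarrow> nat \<Rightarrow> 'a" where
  "gp x n k = (\<Prod>j<k. 1 - x ^ (n - j))"

fun qb1 :: "'a::field \<Rightarrow> nat \<Rightarrow> nat \<Rightarrow> 'a" where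
  "qb1 x 0 k = (if k = 0 then 1 else 0)"
| "qb1 x (Suc n) k = (if k = 0 then 1 else qb1 x n (k - 1) + x ^ k * qb1 x n k)"

fun qb2 :: "'a::field \<Rightarrow> nat \<Rightarrow> nat \<Rightarrow> 'a" where
  "qb2 x 0 k = (if k = 0 then 1 else 0)"
| "qb2 x (Suc n) k = (if k = 0 then 1 else qb2 x n k + x ^ (Suc n - k) * qb2 x n (k - 1))"

lemma poch_Suc: "poch b x (Suc k) = poch b x k * (1 - b * x ^ k)"
  by (simp add: poch_def)

lemma gp_Suc: "gp x n (Suc k) = gp x n k * (1 - x ^ (n - k))"
  by (simp add: gp_def)

lemma qb1_0 [simp]: "qb1 x n 0 = 1"
  by (cases n) auto

lemma qb2_0 [simp]: "qb2 x n 0 = 1"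
  by (cases n) auto

lemma qb1_gt: "n < k \<Longrightarrow> qb1 x n k = 0"
  by (induction n arbitrary: k) auto

lemma qb2_gt: "n < k \<Longrightarrow> qb2 x n k = 0"
  by (induction n arbitrary: k) auto

lemma gp_gt: "n < k \<Longrightarrow> gp x n k = 0"
proof -
  assume "n < k"
  then have "n \<in> {..<k}" by simp
  then show ?thesis unfolding gp_def
    apply (intro prod_zero)
     apply simp
    apply (rule bexI[of _ n])
    by simp_all
qed

lemma gp_Suc_Suc: "gp x (Suc n) (Suc k) = (1 - x ^ Suc n) * gp x n k"
  unfolding gp_def prod.lessThan_Suc_shift by simp

lemma PF1: "qb1 x n k * poch x x k = gp x n k"
proof (induction n arbitrary: k)
  case 0
  then show ?case by (cases k) (auto simp: poch_def gp_gt gp_def)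
next
  case (Suc n)
  show ?case
  proof (cases k)
    case 0 then show ?thesis by (simp add: poch_def gp_def)
  next
    case (Suc k')
    have "qb1 x (Suc n) k * poch x x k
        = qb1 x n k' * poch x x k' * (1 - x * x ^ k') + x ^ Suc k' * (qb1 x n (Suc k') * poch x x (Suc k'))"
      using Suc by (simp add: poch_Suc algebra_simps)
    also have "\<dots> = gp x n k' * (1 - x * x ^ k') + x ^ Suc k' * (gp x n k' * (1 - x ^ (n - k')))"
      using Suc.IH[of k'] Suc.IH[of "Suc k'"] by (simp add: gp_Suc)
    also have "\<dots> = (1 - x ^ Suc n) * gp x n k'"
    proof (cases "k' \<le> n")
      case True
      then have h: "x ^ Suc n = x ^ Suc k' * x ^ (n - k')"
        by (simp add: power_add[symmetric])
      show ?thesis by (subst h) (simp add: algebra_simps)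
    next
      case False then show ?thesis by (simp add: gp_gt)
    qed
    also have "\<dots> = gp x (Suc n) k" using Suc by (simp add: gp_Suc_Suc)
    finally show ?thesis .
  qed
qed

lemma PF2: "qb2 x n k * poch x x k = gp x n k"
proof (induction n arbitrary: k)
  case 0
  then show ?case by (cases k) (auto simp: poch_def gp_gt gp_def)
next
  case (Suc n)
  show ?case
  proof (cases k)
    case 0 then show ?thesis by (simp add: poch_def gp_def)
  next
    case (Suc k')
    have "qb2 x (Suc n) k * poch x x k
        = qb2 x n (Suc k') * poch x x (Suc k') + x ^ (n - k') * (qb2 x n k' * poch x x k') * (1 - x * x ^ k')"
      using Suc by (simp add: poch_Suc algebra_simps)
    also have "\<dots> = gp x n k' * (1 - x ^ (n - k')) + x ^ (n - k') * gp x n k' * (1 - x * x ^ k')"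
      using Suc.IH[of k'] Suc.IH[of "Suc k'"] by (simp add: gp_Suc)
    also have "\<dots> = (1 - x ^ Suc n) * gp x n k'"
    proof (cases "k' \<le> n")
      case True
      then have h: "x ^ Suc n = x ^ (n - k') * (x * x ^ k')"
        by (simp add: power_add[symmetric])
      show ?thesis by (subst h) (simp add: algebra_simps)
    next
      case False then show ?thesis by (simp add: gp_gt)
    qed
    also have "\<dots> = gp x (Suc n) k" using Suc by (simp add: gp_Suc_Suc)
    finally show ?thesis .
  qed
qed

lemma L1: "(\<Sum>k\<le>n. qb1 x n k * poch al x k * poch be x (n - k) * al ^ (n - k)) = poch (al * be) x n"
proof (induction n)
  case 0
  then show ?case by (simp add: poch_def)
next
  case (Suc n)
  define f where "f k = poch al x k * poch be x (Suc n - k) * al ^ (Suc n - k)" for k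
  have "(\<Sum>k\<le>Suc n. qb1 x (Suc n) k * poch al x k * poch be x (Suc n - k) * al ^ (Suc n - k))
      = (\<Sum>k\<le>Suc n. qb1 x (Suc n) k * f k)" by (simp add: f_def mult.assoc)
  also have "\<dots> = f 0 + (\<Sum>k\<le>n. (qb1 x n k + x ^ Suc k * qb1 x n (Suc k)) * f (Suc k))"
    by (subst sum.atMost_Suc_shift) simp
  also have "\<dots> = (\<Sum>k\<le>n. qb1 x n k * f (Suc k)) + (f 0 + (\<Sum>k\<le>n. x ^ Suc k * qb1 x n (Suc k) * f (Suc k)))"
    by (simp add: algebra_simps sum.distrib)
  also have "f 0 + (\<Sum>k\<le>n. x ^ Suc k * qb1 x n (Suc k) * f (Suc k)) = (\<Sum>k\<le>Suc n. x ^ k * qb1 x n k * f k)"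
    by (subst sum.atMost_Suc_shift) simp
  also have "\<dots> = (\<Sum>k\<le>n. x ^ k * qb1 x n k * f k)"
    by (simp add: qb1_gt)
  also have "(\<Sum>k\<le>n. qb1 x n k * f (Suc k)) + (\<Sum>k\<le>n. x ^ k * qb1 x n k * f k)
      = (\<Sum>k\<le>n. (1 - al * be * x ^ n) * (qb1 x n k * poch al x k * poch be x (n - k) * al ^ (n - k)))"
    unfolding sum.distrib[symmetric]
  proof (rule sum.cong)
    fix k assume "k \<in> {..n}"
    then have k: "k \<le> n" by simp
    have e1: "Suc n - k = Suc (n - k)" using k by simp
    have e2: "x ^ k * x ^ (n - k) = x ^ n" using k by (simp add: power_add[symmetric])
    show "qb1 x n k * f (Suc k) + x ^ k * qb1 x n k * f k =
        (1 - al * be * x ^ n) * (qb1 x n k * poch al x k * poch be x (n - k) * al ^ (n - k))"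
      unfolding f_def e1 using e2
      by (simp add: poch_Suc algebra_simps)
  qed simp
  also have "\<dots> = poch (al * be) x (Suc n)"
    unfolding sum_distrib_left[symmetric] Suc.IH poch_Suc by (simp add: mult.commute)
  finally show ?case .
qed

lemma L2: "(\<Sum>k\<le>n. qb2 x n k * poch al x k * poch be x (n - k) * be ^ k) = poch (al * be) x n"
proof (induction n)
  case 0
  then show ?case by (simp add: poch_def)
next
  case (Suc n)
  define f where "f k = poch al x k * poch be x (Suc n - k) * be ^ k" for k
  have "(\<Sum>k\<le>Suc n. qb2 x (Suc n) k * poch al x k * poch be x (Suc n - k) * be ^ k)
      = (\<Sum>k\<le>Suc n. qb2 x (Suc n) k * f k)" by (simp add: f_def mult.assoc)
  also have "\<dots> = f 0 + (\<Sum>k\<le>n. (qb2 x n (Suc k) + x ^ (n - k) * qb2 x n k) * f (Suc k))"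
    by (subst sum.atMost_Suc_shift) simp
  also have "\<dots> = (f 0 + (\<Sum>k\<le>n. qb2 x n (Suc k) * f (Suc k))) + (\<Sum>k\<le>n. x ^ (n - k) * qb2 x n k * f (Suc k))"
    by (simp add: algebra_simps sum.distrib)
  also have "f 0 + (\<Sum>k\<le>n. qb2 x n (Suc k) * f (Suc k)) = (\<Sum>k\<le>Suc n. qb2 x n k * f k)"
    by (subst sum.atMost_Suc_shift) simp
  also have "\<dots> = (\<Sum>k\<le>n. qb2 x n k * f k)"
    by (simp add: qb2_gt)
  also have "(\<Sum>k\<le>n. qb2 x n k * f k) + (\<Sum>k\<le>n. x ^ (n - k) * qb2 x n k * f (Suc k))
      = (\<Sum>k\<le>n. (1 - al * be * x ^ n) * (qb2 x n k * poch al x k * poch be x (n - k) * be ^ k))"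
    unfolding sum.distrib[symmetric]
  proof (rule sum.cong)
    fix k assume "k \<in> {..n}"
    then have k: "k \<le> n" by simp
    have e1: "Suc n - k = Suc (n - k)" using k by simp
    have e2: "x ^ n = x ^ (n - k) * x ^ k" using k by (simp add: power_add[symmetric])
    show "qb2 x n k * f k + x ^ (n - k) * qb2 x n k * f (Suc k) =
        (1 - al * be * x ^ n) * (qb2 x n k * poch al x k * poch be x (n - k) * be ^ k)"
      unfolding f_def e1 by (subst e2) (simp add: poch_Suc algebra_simps)
  qed simp
  also have "\<dots> = poch (al * be) x (Suc n)"
    unfolding sum_distrib_left[symmetric] Suc.IH poch_Suc by (simp add: mult.commute)
  finally show ?case .
qed

lemma H1: "(a::'a::field) \<noteq> 0 \<Longrightarrow> (\<Prod>j<l. a - x ^ Suc j) = a ^ l * poch (x / a) x l"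
  by (induction l) (simp_all add: poch_def field_simps)

lemma H2: "l \<le> n \<Longrightarrow> (\<Prod>j<l. 1 - a * x ^ (n - j)) * poch (a * x) x (n - l) = poch (a * x) x (n::nat)"
proof (induction l)
  case 0 then show ?case by simp
next
  case (Suc l)
  have e: "n - l = Suc (n - Suc l)" using Suc.prems by simp
  have "(\<Prod>j<Suc l. 1 - a * x ^ (n - j)) * poch (a * x) x (n - Suc l)
      = (\<Prod>j<l. 1 - a * x ^ (n - j)) * (poch (a * x) x (n - Suc l) * (1 - a * x * x ^ (n - Suc l)))"
    by (simp add: e algebra_simps)
  also have "\<dots> = (\<Prod>j<l. 1 - a * x ^ (n - j)) * poch (a * x) x (n - l)"
    by (simp only: e poch_Suc)
  also have "\<dots> = poch (a * x) x n" using Suc by simp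
  finally show ?case .
qed

theorem corollary3p4:
  fixes z q :: complex and n :: nat and m :: int
  assumes "n > 0"
    and "q \<noteq> 0"
    and "\<forall>i\<in>{1..n}. z ^ i \<noteq> 1"
    and "\<forall>i\<in>{1..n}. q powi m * z ^ (n - i + 1) \<noteq> 1"
  shows "(\<Sum>l = 0..n. (q powi (- (int n * m)) * z ^ (n - l) - z ^ l) *
            (\<Prod>i = 1..l. ((q powi m - z ^ i) * (1 - z ^ (n - i + 1))) /
                            ((1 - q powi m * z ^ (n - i + 1)) * (1 - z ^ i)))) = 0"
proof -
  define a where "a = q powi m"
  have a0: "a \<noteq> 0" using assms(2) by (simp add: a_def)
  have "q powi (int n * m) = q powi (m * int n)" by (simp add: mult.commute)
  also have "\<dots> = (q powi m) powi (int n)" by (rule power_int_mult)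
  finally have inv: "q powi (- (int n * m)) = inverse (a ^ n)"
    by (simp add: a_def power_int_minus)
  have X: "z ^ Suc j \<noteq> 1" if "j < n" for j
    using assms(3) that by (metis One_nat_def Suc_leI atLeastAtMost_iff le_add1 plus_1_eq_Suc)
  have Y: "a * z ^ (n - j) \<noteq> 1" if "j < n" for j
  proof -
    have "n - Suc j + 1 = n - j" using that by simp
    then show ?thesis using assms(4) that unfolding a_def
      by (metis Suc_leI atLeastAtMost_iff le_add1 plus_1_eq_Suc)
  qed
  define al where "al = z / a"
  define be where "be = a * z"
  define Dn where "Dn = poch be z n"
  have Dn0: "Dn \<noteq> 0"
  proof -
    have "1 - a * z * z ^ j \<noteq> 0" if "j < n" for j
    proof -
      have "a * z * z ^ j = a * z ^ (n - (n - j - 1))" using that by (simp add: Suc_diff_Suc)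
      then show ?thesis using Y[of "n - j - 1"] that by (simp add: mult.assoc)
    qed
    then show ?thesis unfolding Dn_def poch_def be_def by (simp add: prod_zero_iff)
  qed
  have Pz: "poch z z l \<noteq> 0" if "l \<le> n" for l
    unfolding poch_def using X that by (simp add: prod_zero_iff)
  have key: "(q powi (- (int n * m)) * z ^ (n - l) - z ^ l) *
            (\<Prod>i = 1..l. ((q powi m - z ^ i) * (1 - z ^ (n - i + 1))) /
                            ((1 - q powi m * z ^ (n - i + 1)) * (1 - z ^ i)))
      = qb1 z n l * poch al z l * poch be z (n - l) * al ^ (n - l) / Dn
        - qb2 z n l * poch al z l * poch be z (n - l) * be ^ l / Dn"
    if l: "l \<le> n" for l
  proof -
    define C where "C = (\<Prod>j<l. 1 - a * z ^ (n - j))"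
    have CD: "C * poch be z (n - l) = Dn" unfolding C_def Dn_def be_def using H2[OF l] .
    have C0: "C \<noteq> 0" and B0: "poch be z (n - l) \<noteq> 0" using CD Dn0 by auto
    have "(\<Prod>i = 1..l. ((q powi m - z ^ i) * (1 - z ^ (n - i + 1))) /
                            ((1 - q powi m * z ^ (n - i + 1)) * (1 - z ^ i)))
        = (\<Prod>j<l. ((a - z ^ Suc j) * (1 - z ^ (n - j))) / ((1 - a * z ^ (n - j)) * (1 - z ^ Suc j)))"
    proof -
      have "{1..l} = {Suc 0..l}" by simp
      then have "(\<Prod>i = 1..l. ((q powi m - z ^ i) * (1 - z ^ (n - i + 1))) /
                            ((1 - q powi m * z ^ (n - i + 1)) * (1 - z ^ i)))
          = (\<Prod>j<l. ((a - z ^ Suc j) * (1 - z ^ (n - Suc j + 1))) / ((1 - a * z ^ (n - Suc j + 1)) * (1 - z ^ Suc j)))"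
        by (simp only: prod.atLeast1_atMost_eq a_def)
      also have "\<dots> = (\<Prod>j<l. ((a - z ^ Suc j) * (1 - z ^ (n - j))) / ((1 - a * z ^ (n - j)) * (1 - z ^ Suc j)))"
      proof (rule prod.cong)
        fix j assume "j \<in> {..<l}"
        then have "n - Suc j + 1 = n - j" using l by auto
        then show "((a - z ^ Suc j) * (1 - z ^ (n - Suc j + 1))) / ((1 - a * z ^ (n - Suc j + 1)) * (1 - z ^ Suc j))
          = ((a - z ^ Suc j) * (1 - z ^ (n - j))) / ((1 - a * z ^ (n - j)) * (1 - z ^ Suc j))" by (simp only:)
      qed simp
      finally show ?thesis .
    qed
    also have "\<dots> = ((\<Prod>j<l. a - z ^ Suc j) * gp z n l) / (C * poch z z l)"
      by (simp add: prod_dividef prod.distrib C_def gp_def poch_def)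
    also have "\<dots> = a ^ l * poch al z l * (gp z n l / poch z z l) * poch be z (n - l) / Dn"
      using C0 B0 Pz[OF l] unfolding H1[OF a0] al_def CD[symmetric] by (simp add: field_simps)
    finally have P: "(\<Prod>i = 1..l. ((q powi m - z ^ i) * (1 - z ^ (n - i + 1))) /
                            ((1 - q powi m * z ^ (n - i + 1)) * (1 - z ^ i)))
        = a ^ l * poch al z l * (gp z n l / poch z z l) * poch be z (n - l) / Dn" .
    have g1: "gp z n l / poch z z l = qb1 z n l" using PF1[of z n l] Pz[OF l] by (simp add: field_simps)
    have g2: "gp z n l / poch z z l = qb2 z n l" using PF2[of z n l] Pz[OF l] by (simp add: field_simps)
    have an: "a ^ n = a ^ (n - l) * a ^ l" using l by (simp add: power_add[symmetric])
    have t1: "inverse (a ^ n) * z ^ (n - l) * a ^ l = al ^ (n - l)"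
      unfolding an al_def using a0 by (simp add: field_simps power_divide)
    have t2: "z ^ l * a ^ l = be ^ l" unfolding be_def by (simp add: power_mult_distrib mult.commute)
    have "(q powi (- (int n * m)) * z ^ (n - l) - z ^ l) * (a ^ l * poch al z l * (gp z n l / poch z z l) * poch be z (n - l) / Dn)
        = (inverse (a ^ n) * z ^ (n - l) * a ^ l) * (gp z n l / poch z z l) * poch al z l * poch be z (n - l) / Dn
          - (z ^ l * a ^ l) * (gp z n l / poch z z l) * poch al z l * poch be z (n - l) / Dn"
      unfolding inv using Dn0 Pz[OF l] by (simp add: field_simps)
    also have "\<dots> = qb1 z n l * poch al z l * poch be z (n - l) * al ^ (n - l) / Dn
        - qb2 z n l * poch al z l * poch be z (n - l) * be ^ l / Dn"
      unfolding t1 t2 by (subst g1, subst g2) (simp add: algebra_simps)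
    finally show ?thesis using P by simp
  qed
  have "(\<Sum>l = 0..n. (q powi (- (int n * m)) * z ^ (n - l) - z ^ l) *
            (\<Prod>i = 1..l. ((q powi m - z ^ i) * (1 - z ^ (n - i + 1))) /
                            ((1 - q powi m * z ^ (n - i + 1)) * (1 - z ^ i))))
      = (\<Sum>l\<le>n. qb1 z n l * poch al z l * poch be z (n - l) * al ^ (n - l) / Dn
        - qb2 z n l * poch al z l * poch be z (n - l) * be ^ l / Dn)"
    unfolding atLeast0AtMost by (rule sum.cong) (simp, rule key, simp)
  also have "\<dots> = poch (al * be) z n / Dn - poch (al * be) z n / Dn"
    by (simp only: sum_subtractf sum_divide_distrib[symmetric] L1 L2)
  finally show ?thesis by simp
qed

end
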